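(* All walls that appear in diagonal or nearly diagonal wall crossings are simple.
   Context: Let $X$ be a smooth connected projective curve of genus $g \ge 2$ over $\mathbb{C}$, let $r, d$ be positive integers with $\gcd(r,d)=1$ and $0<d<r$, and fix a line bundle $L$ of degree $d$ on $X$. Fix two distinct points $x_1, x_2 \in X$. A parabolic bundle $(E, V_1, V_2)$ consists of a rank $r$ vector bundle $E$ with $\det E \cong L$ and subspaces $V_i \subset E|_{x_i}$ of dimensions $\mathbf{m} = (m_1,m_2) = (r-1, 1)$. For a weight $\mathbf{a} = (a_1,a_2) \in (0,1)^2$, $(E,V_\bullet)$ is $\mathbf{a}$-(semi)stable if for every proper subbundle $F\subset E$ of rank $s$ and degree $e$, $\frac{e + \sum_i a_i \dim(V_i\cap F|_{x_i})}{s} < (\le) \frac{d + \sum_i a_i \dim V_i}{r}$; let $\mathrm{M}(r,L,\mathbf{a})$ denote the moduli space. A wall in $[0,1]^2$ is a set $\Delta(s,e,\mathbf{n}) = \{\mathbf{a} \mid (e + n_1a_1+n_2a_2)/s = (d+(r-1)a_1+a_2)/r\}$ with integers $0<s<r$, $e$, $r-2\le n_1\le r-1$, $0\le n_2\le 1$ (across which stability changes); note $\Delta(s,e,\mathbf{n}) = \Delta(r-s,d-e,\mathbf{m}-\mathbf{n})$. A wall is called simple if the greatest common divisor of $\{s,e,n_1,n_2\}$ and that of $\{r-s, d-e, m_1-n_1, m_2-n_2\}$ are both one; otherwise (if a common divisor $c>1$ exists) it is a multiple wall. A wall crossing is diagonal if the wall is crossed while the weight $\mathbf{a}$ increases along the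 line $a_1=a_2$, and nearly diagonal if it is crossed while $\mathbf{a}$ increases along the line $r a_1 = (r+1) a_2$. *)

theory Defs
  imports Main Complex_Main
begin

text \<open>Parabolic data: rank r, degree d, flag dimensions m = (r-1, 1) at two points.
  A wall Delta(s,e,n) is the set of weights a = (a1,a2) with
  (e + n1 a1 + n2 a2)/s = (d + (r-1) a1 + a2)/r.\<close>

definition wall :: "nat \<Rightarrow> nat \<Rightarrow> nat \<Rightarrow> int \<Rightarrow> nat \<Rightarrow> nat \<Rightarrow> (real \<times> real) set" where
  "wall r d s e n1 n2 =
     {(a1, a2). (real_of_int e + real n1 * a1 + real n2 * a2) / real s
              = (real d + real (r - 1) * a1 + a2) / real r}"

text \<open>Admissible numerical data for a wall: 0 < s < r, 0 <= n_i <= m_i, and the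
  dimension constraints n_i <= s (intersection lies in F) and m_i - n_i <= r - s
  (complementary constraint), i.e. max(0, s+m_i-r) <= n_i <= min(s, m_i).\<close>

definition wall_data :: "nat \<Rightarrow> nat \<Rightarrow> nat \<Rightarrow> nat \<Rightarrow> bool" where
  "wall_data r s n1 n2 \<longleftrightarrow>
     0 < s \<and> s < r \<and> n1 \<le> r - 1 \<and> n2 \<le> 1 \<and>
     n1 \<le> s \<and> n2 \<le> s \<and> (r - 1) - n1 \<le> r - s \<and> 1 - n2 \<le> r - s"

definition simple_wall :: "nat \<Rightarrow> nat \<Rightarrow> nat \<Rightarrow> int \<Rightarrow> nat \<Rightarrow> nat \<Rightarrow> bool" where
  "simple_wall r d s e n1 n2 \<longleftrightarrow>
     Gcd {int s, e, int n1, int n2} = 1 \<and>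
     Gcd {int (r - s), int d - e, int ((r - 1) - n1), int (1 - n2)} = 1"

definition diagonal_crossing :: "nat \<Rightarrow> nat \<Rightarrow> nat \<Rightarrow> int \<Rightarrow> nat \<Rightarrow> nat \<Rightarrow> bool" where
  "diagonal_crossing r d s e n1 n2 \<longleftrightarrow>
     (\<exists>t::real. 0 < t \<and> t < 1 \<and> (t, t) \<in> wall r d s e n1 n2)"

definition nearly_diagonal_crossing :: "nat \<Rightarrow> nat \<Rightarrow> nat \<Rightarrow> int \<Rightarrow> nat \<Rightarrow> nat \<Rightarrow> bool" where
  "nearly_diagonal_crossing r d s e n1 n2 \<longleftrightarrow>
     (\<exists>a1 a2::real. 0 < a1 \<and> a1 < 1 \<and> 0 < a2 \<and> a2 < 1 \<and>
        real r * a1 = real (r + 1) * a2 \<and> (a1, a2) \<in> wall r d s e n1 n2)"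

end

theory Submission
  imports Defs
begin

lemma no_diag_eq:
  fixes r d s :: nat and e :: int
  assumes "0 < s" "s < r" "coprime r d" "real r * real_of_int e = real s * real d"
  shows False
proof -
  have "int r * e = int s * int d"
    using assms(4) by (metis of_int_eq_iff of_int_mult of_int_of_nat_eq)
  hence "int r dvd int s * int d" by (metis dvd_triv_left)
  hence "r dvd s * d" by (metis of_nat_dvd_iff of_nat_mult)
  hence "r dvd s" using assms(3) by (metis coprime_dvd_mult_left_iff)
  thus False using assms(1,2) by (simp add: nat_dvd_not_less)
qed

lemma no_int_between:
  fixes X Y :: int and r :: nat
  assumes "0 < X" "(int r + 1) * X < Y" "Y \<le> int r"
  shows False
proof -
  have "(int r + 1) * 1 \<le> (int r + 1) * X" using assms(1) by (intro mult_left_mono) auto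
  hence h: "int r + 1 \<le> (int r + 1) * X" by simp
  from h assms(2,3) show False by linarith
qed

lemma gcd_consec:
  fixes a b :: int
  assumes "a - b = 1"
  shows "gcd a b = 1"
proof -
  have "gcd a b dvd a - b" by (simp add: dvd_diff)
  hence "gcd a b dvd 1" using assms by simp
  hence "is_unit (gcd a b)" by simp
  thus ?thesis by (simp add: is_unit_gcd coprime_iff_gcd_eq_1)
qed

theorem proposition3p1:
  fixes r d s n1 n2 :: nat and e :: int
  assumes "0 < d" and "d < r" and "coprime r d"
    and "wall_data r s n1 n2"
    and "diagonal_crossing r d s e n1 n2 \<or> nearly_diagonal_crossing r d s e n1 n2"
  shows "simple_wall r d s e n1 n2"
proof -
  have s0: "0 < s" and sr: "s < r" and n2: "n2 = 0 \<or> n2 = 1" and n1: "n1 = s \<or> n1 + 1 = s"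
    using assms(4) unfolding wall_data_def by auto
  have rpos: "real r > 0" using sr by simp
  have spos: "real s > 0" using s0 by simp
  consider "n1 = s" "n2 = 0" | "n1 + 1 = s" "n2 = 1" | "n1 = s" "n2 = 1" | "n1 + 1 = s" "n2 = 0"
    using n1 n2 by blast
  thus ?thesis
  proof cases
    case 1
    show ?thesis
    proof (rule ccontr)
      from assms(5) show False
      proof
        assume "diagonal_crossing r d s e n1 n2"
        then obtain t :: real where t: "(real_of_int e + real s * t + 0 * t) / real s
              = (real d + real (r - 1) * t + t) / real r"
          unfolding diagonal_crossing_def wall_def using 1 by auto
        have "real (r - 1) = real r - 1" using sr by simp
        hence "real r * real_of_int e = real s * real d"
          using t rpos spos by (simp add: field_simps)
        thus False using no_diag_eq s0 sr assms(3) by blast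
      next
        assume "nearly_diagonal_crossing r d s e n1 n2"
        then obtain a1 a2 :: real where a: "0 < a1" "a1 < 1" "real r * a1 = real (r + 1) * a2"
          "(real_of_int e + real s * a1 + 0 * a2) / real s
              = (real d + real (r - 1) * a1 + a2) / real r"
          unfolding nearly_diagonal_crossing_def wall_def using 1 by auto
        have r1: "real (r - 1) = real r - 1" using sr by simp
        have a2: "a2 = real r * a1 / (real r + 1)" using a(3) by (simp add: field_simps)
        have eq: "real r * (real_of_int e + real s * a1) = real s * (real d + (real r - 1) * a1 + a2)"
          using a(4) rpos spos r1 by (simp add: field_simps)
        define X where "X = int s * int d - int r * e"
        have X: "real_of_int X = real s * a1 / (real r + 1)"
          unfolding X_def using eq a2 rpos by (simp add: field_simps)
        have "real_of_int X > 0" using X a spos rpos by simp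
        hence "X > 0" by simp
        have "(real r + 1) * real_of_int X < real s" using X a spos rpos by simp
        hence "real_of_int ((int r + 1) * X) < real_of_int (int s)" by simp
        hence "(int r + 1) * X < int s" by (simp only: of_int_less_iff)
        thus False using no_int_between[of X r "int s"] \<open>X > 0\<close> sr by simp
      qed
    qed
  next
    case 2
    show ?thesis
    proof (rule ccontr)
      from assms(5) show False
      proof
        assume "diagonal_crossing r d s e n1 n2"
        then obtain t :: real where t: "(real_of_int e + real n1 * t + 1 * t) / real s
              = (real d + real (r - 1) * t + t) / real r"
          unfolding diagonal_crossing_def wall_def using 2 by auto
        have r1: "real (r - 1) = real r - 1" using sr by simp
        have hs: "real s = real n1 + 1" using 2 by linarith
        have "real r * (real_of_int e + real n1 * t + t) = real s * (real d + real r * t)"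
          using t rpos spos r1 by (simp add: field_simps)
        hence "real r * real_of_int e = real s * real d"
          unfolding hs by (simp add: algebra_simps)
        thus False using no_diag_eq s0 sr assms(3) by blast
      next
        assume "nearly_diagonal_crossing r d s e n1 n2"
        then obtain a1 a2 :: real where a: "0 < a1" "a1 < 1" "real r * a1 = real (r + 1) * a2"
          "(real_of_int e + real n1 * a1 + 1 * a2) / real s
              = (real d + real (r - 1) * a1 + a2) / real r"
          unfolding nearly_diagonal_crossing_def wall_def using 2 by auto
        have r1: "real (r - 1) = real r - 1" using sr by simp
        have n1r: "real n1 = real s - 1" using 2 by linarith
        have a2: "a2 = real r * a1 / (real r + 1)" using a(3) by (simp add: field_simps)
        have eq: "real r * (real_of_int e + (real s - 1) * a1 + a2) = real s * (real d + (real r - 1) * a1 + a2)"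
          using a(4) rpos spos r1 n1r by (simp add: field_simps)
        define X where "X = int r * e - int s * int d"
        have X: "real_of_int X = (real r - real s) * a1 / (real r + 1)"
          unfolding X_def using eq a2 rpos by (simp add: field_simps)
        have rs: "real r - real s > 0" using sr by simp
        have "real_of_int X > 0" using X a rs rpos by simp
        hence "X > 0" by simp
        have "(real r + 1) * real_of_int X < real r - real s" using X a rs rpos by simp
        hence "real_of_int ((int r + 1) * X) < real_of_int (int r - int s)" by simp
        hence "(int r + 1) * X < int r - int s" by (simp only: of_int_less_iff)
        thus False using no_int_between[of X r "int r - int s"] \<open>X > 0\<close> by simp
      qed
    qed
  next
    case 3
    have "r - 1 - n1 = (r - s) - 1" using 3 by simp
    hence g: "gcd (int (r - s)) (int (r - 1 - n1)) = 1"
      using sr by (intro gcd_consec) simp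
    show ?thesis unfolding simple_wall_def using 3 g
      by (simp add: gcd.left_commute)
  next
    case 4
    have g: "gcd (int s) (int n1) = 1" using 4 by (intro gcd_consec) simp
    show ?thesis unfolding simple_wall_def using 4 g
      by (simp add: gcd.left_commute)
  qed
qed

end
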